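(* Let $(X,d)$ be a compact doubling metric space with $\operatorname{diam}(X,d)=1/2$ and $\mathcal S$ a hyperbolic filling with parameters $a\ge\lambda\ge6$. Let $\rho:\mathcal S\to(0,\infty)$ satisfy (H1) and (H4) (with exponent $p$), and let $C\ge\eta_-^{-p}$. Let $k\ge0$ and let $\mu_k$ be a $(C,\pi)$-balanced probability mass function on $\mathcal S_k$. Then there exists a probability mass function $\mu_{k+1}$ on $\mathcal S_{k+1}$ such that: (1) the pair $(\mu_k,\mu_{k+1})$ is $(C,\pi)$-compatible; (2) $\mu_{k+1}$ is $(C,\pi)$-balanced; (3) there is a probability measure $\mu_{k,k+1}$ on $X\times X$ whose marginals (pushforwards under the two coordinate projections) are $\tilde\mu_k=\sum_{u\in\mathcal S_k}\mu_k(u)\delta_{\pi_1(u)}$ and $\tilde\mu_{k+1}=\sum_{v\in\mathcal S_{k+1}}\mu_{k+1}(v)\delta_{\pi_1(v)}$, and such that $\mu_{k,k+1}(\{(x_1,x_2)\in X\times X:d(x_1,x_2)\ge(1+2\lambda a^{-1})a^{-k}\})=0$.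
   Context: Hyperbolic filling: $X_0\subset X_1\subset\cdots$ increasing, $X_n$ maximal $a^{-n}$-separated in $X$ ($X_0=\{x_0\}$); $\mathcal S_n=\{(x,n):x\in X_n\}$, $\mathcal S=\bigcup_n\mathcal S_n$, $\pi_1(x,n)=x$, $v_0=(x_0,0)$. Each $(x,n)$, $n\ge1$, has a fixed parent $(y,n-1)$ with $d(x,y)=\min_{z\in X_{n-1}}d(x,z)$; descendants iterate the child relation; $\mathcal D_n(v)$ = descendants of $v$ in $\mathcal S_n$; genealogy $g(v)=(v_0,\dots,v_k=v)$ with $v_i$ parent of $v_{i+1}$. $D_2$: graph distance for the graph with edges vertex–parent and horizontal edges between distinct $(x,n),(y,n)$ with $B(x,\lambda a^{-n})\cap B(y,\lambda a^{-n})\ne\emptyset$. $\delta_x$ is the Dirac mass at $x$. $\pi(v)=\prod_{w\in g(v)}\rho(w)$. (H1) $0<\eta_-\le\rho\le\eta_+<1$. (H4) $\sum_{w\in\mathcal D_n(v)}\pi(w)^p\le\pi(v)^p$ for all $v\in\mathcal S_m$, $n>m$. A function $f:\mathcal S_k\to(0,\infty)$ is $(C,\pi)$-balanced if $f(u)/\pi(u)^p\le C^2f(v)/\pi(v)^p$ for all $u,v\in\mathcal S_k$ with $D_2(u,v)=1$. A pair $f_0:\mathcal S_k\to(0,\infty)$, $f_1:\mathcal S_{k+1}\to(0,\infty)$ is $(C,\pi)$-compatible if $f_0(u)/\pi(u)^p\le f_1(v)/\pi(v)^p\le Cf_0(u)/\pi(u)^p$ whenever $u\in\mathcal S_k$ is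 the parent of $v\in\mathcal S_{k+1}$. *)

theory Defs
  imports "HOL-Analysis.Analysis" "HOL-Probability.Probability"
begin

text \<open>The metric space X is the whole (compact) type 'a.  Vertices of the
hyperbolic filling are pairs (x, n) with x in Xs n.  The fixed parent of
(x, n), n >= 1, is (par x n, n - 1).\<close>

definition doubling :: "'a::metric_space itself \<Rightarrow> bool" where
  "doubling _ \<longleftrightarrow> (\<exists>N::nat. \<forall>(x::'a) r. r > 0 \<longrightarrow>
      (\<exists>F. finite F \<and> card F \<le> N \<and> ball x r \<subseteq> (\<Union>y\<in>F. ball y (r/2))))"

definition separated :: "real \<Rightarrow> 'a::metric_space set \<Rightarrow> bool" where
  "separated r A \<longleftrightarrow> (\<forall>x\<in>A. \<forall>y\<in>A. x \<noteq> y \<longrightarrow> dist x y \<ge> r)"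

definition maximal_separated :: "real \<Rightarrow> 'a::metric_space set \<Rightarrow> bool" where
  "maximal_separated r A \<longleftrightarrow> separated r A \<and>
      (\<forall>z. z \<notin> A \<longrightarrow> \<not> separated r (insert z A))"

definition hyp_filling ::
  "real \<Rightarrow> real \<Rightarrow> (nat \<Rightarrow> 'a::metric_space set) \<Rightarrow> 'a \<Rightarrow> ('a \<Rightarrow> nat \<Rightarrow> 'a) \<Rightarrow> bool" where
  "hyp_filling a lam Xs x0 par \<longleftrightarrow>
     Xs 0 = {x0} \<and> (\<forall>n. Xs n \<subseteq> Xs (Suc n)) \<and>
     (\<forall>n. maximal_separated (a powr (- real n)) (Xs n)) \<and>
     (\<forall>n x. n \<ge> 1 \<longrightarrow> x \<in> Xs n \<longrightarrow>
        par x n \<in> Xs (n - 1) \<and> (\<forall>z\<in>Xs (n - 1). dist x (par x n) \<le> dist x z))"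

definition Sv :: "(nat \<Rightarrow> 'a set) \<Rightarrow> nat \<Rightarrow> ('a \<times> nat) set" where
  "Sv Xs n = (\<lambda>x. (x, n)) ` Xs n"

definition Sall :: "(nat \<Rightarrow> 'a set) \<Rightarrow> ('a \<times> nat) set" where
  "Sall Xs = (\<Union>n. Sv Xs n)"

text \<open>anc par x n m: the first component of the ancestor at level m of (x, n), for m \<le> n.\<close>
primrec anc :: "('a \<Rightarrow> nat \<Rightarrow> 'a) \<Rightarrow> 'a \<Rightarrow> nat \<Rightarrow> nat \<Rightarrow> 'a" where
  "anc par x 0 m = x"
| "anc par x (Suc n) m = (if Suc n \<le> m then x else anc par (par x (Suc n)) n m)"

definition Desc :: "(nat \<Rightarrow> 'a set) \<Rightarrow> ('a \<Rightarrow> nat \<Rightarrow> 'a) \<Rightarrow> nat \<Rightarrow> 'a \<times> nat \<Rightarrow> ('a \<times> nat) set" where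
  "Desc Xs par n v = {w \<in> Sv Xs n. snd v < n \<and> anc par (fst w) n (snd v) = fst v}"

primrec pw :: "('a \<times> nat \<Rightarrow> real) \<Rightarrow> ('a \<Rightarrow> nat \<Rightarrow> 'a) \<Rightarrow> nat \<Rightarrow> 'a \<Rightarrow> real" where
  "pw rho par 0 x = rho (x, 0)"
| "pw rho par (Suc n) x = rho (x, Suc n) * pw rho par n (par x (Suc n))"

definition piv :: "('a \<times> nat \<Rightarrow> real) \<Rightarrow> ('a \<Rightarrow> nat \<Rightarrow> 'a) \<Rightarrow> 'a \<times> nat \<Rightarrow> real" where
  "piv rho par v = pw rho par (snd v) (fst v)"

definition is_parent :: "(nat \<Rightarrow> 'a set) \<Rightarrow> ('a \<Rightarrow> nat \<Rightarrow> 'a) \<Rightarrow> 'a \<times> nat \<Rightarrow> 'a \<times> nat \<Rightarrow> bool" where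
  "is_parent Xs par u v \<longleftrightarrow> v \<in> Sall Xs \<and> snd v \<ge> 1 \<and> u = (par (fst v) (snd v), snd v - 1)"

text \<open>Edges of the graph defining D_2: vertex--parent edges and horizontal edges.\<close>
definition fill_edge :: "real \<Rightarrow> real \<Rightarrow> (nat \<Rightarrow> 'a::metric_space set) \<Rightarrow> ('a \<Rightarrow> nat \<Rightarrow> 'a)
    \<Rightarrow> 'a \<times> nat \<Rightarrow> 'a \<times> nat \<Rightarrow> bool" where
  "fill_edge a lam Xs par u v \<longleftrightarrow>
     is_parent Xs par u v \<or> is_parent Xs par v u \<or>
     (u \<in> Sall Xs \<and> v \<in> Sall Xs \<and> snd u = snd v \<and> u \<noteq> v \<and>
      ball (fst u) (lam * a powr (- real (snd u))) \<inter> ball (fst v) (lam * a powr (- real (snd v))) \<noteq> {})"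

definition D2_one :: "real \<Rightarrow> real \<Rightarrow> (nat \<Rightarrow> 'a::metric_space set) \<Rightarrow> ('a \<Rightarrow> nat \<Rightarrow> 'a)
    \<Rightarrow> 'a \<times> nat \<Rightarrow> 'a \<times> nat \<Rightarrow> bool" where
  "D2_one a lam Xs par u v \<longleftrightarrow> u \<noteq> v \<and> fill_edge a lam Xs par u v"

definition balanced :: "real \<Rightarrow> real \<Rightarrow> (nat \<Rightarrow> 'a::metric_space set) \<Rightarrow> ('a \<Rightarrow> nat \<Rightarrow> 'a)
    \<Rightarrow> ('a \<times> nat \<Rightarrow> real) \<Rightarrow> real \<Rightarrow> real \<Rightarrow> nat \<Rightarrow> ('a \<times> nat \<Rightarrow> real) \<Rightarrow> bool" where
  "balanced a lam Xs par rho p C k f \<longleftrightarrow>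
     (\<forall>u\<in>Sv Xs k. f u > 0) \<and>
     (\<forall>u\<in>Sv Xs k. \<forall>v\<in>Sv Xs k. D2_one a lam Xs par u v \<longrightarrow>
        f u / piv rho par u powr p \<le> C\<^sup>2 * f v / piv rho par v powr p)"

definition compatible :: "(nat \<Rightarrow> 'a set) \<Rightarrow> ('a \<Rightarrow> nat \<Rightarrow> 'a)
    \<Rightarrow> ('a \<times> nat \<Rightarrow> real) \<Rightarrow> real \<Rightarrow> real \<Rightarrow> nat \<Rightarrow> ('a \<times> nat \<Rightarrow> real) \<Rightarrow> ('a \<times> nat \<Rightarrow> real) \<Rightarrow> bool" where
  "compatible Xs par rho p C k f0 f1 \<longleftrightarrow>
     (\<forall>u\<in>Sv Xs k. \<forall>v\<in>Sv Xs (Suc k). is_parent Xs par u v \<longrightarrow>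
        f0 u / piv rho par u powr p \<le> f1 v / piv rho par v powr p \<and>
        f1 v / piv rho par v powr p \<le> C * f0 u / piv rho par u powr p)"

definition pmf_on :: "('b \<Rightarrow> real) \<Rightarrow> 'b set \<Rightarrow> bool" where
  "pmf_on f A \<longleftrightarrow> finite A \<and> (\<forall>u\<in>A. f u \<ge> 0) \<and> (\<Sum>u\<in>A. f u) = 1"

end

theory Submission
  imports Defs
begin


lemma fill_lemma:
  fixes U :: "'u set" and A :: "'u \<Rightarrow> 'v set" and D :: "'u \<Rightarrow> real" and R0 :: "'v \<Rightarrow> real"
  assumes "finite U" "\<forall>u\<in>U. finite (A u)" "\<forall>u\<in>U. D u \<ge> 0" "\<forall>v. R0 v \<ge> 0"
  shows "\<exists>E R. (\<forall>v. R v \<ge> 0) \<and> (\<forall>v. R v + (\<Sum>u\<in>U. E u v) = R0 v) \<and>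
     (\<forall>u\<in>U. \<forall>v. E u v \<ge> 0 \<and> (v \<notin> A u \<longrightarrow> E u v = 0)) \<and>
     (\<forall>u\<in>U. (\<Sum>v\<in>A u. E u v) \<le> D u \<and> ((\<Sum>v\<in>A u. E u v) = D u \<or> (\<forall>v\<in>A u. R v = 0)))"
  using assms(1,2,3)
proof (induction U rule: finite_induct)
  case empty
  show ?case by (rule exI[of _ "\<lambda>_ _. 0"], rule exI[of _ R0]) (use assms(4) in auto)
next
  case (insert u U)
  then obtain E R where
    R1: "\<forall>v. R v \<ge> 0" and R2: "\<forall>v. R v + (\<Sum>u\<in>U. E u v) = R0 v" and
    R3: "\<forall>u\<in>U. \<forall>v. E u v \<ge> 0 \<and> (v \<notin> A u \<longrightarrow> E u v = 0)" and
    R4: "\<forall>u\<in>U. (\<Sum>v\<in>A u. E u v) \<le> D u \<and> ((\<Sum>v\<in>A u. E u v) = D u \<or> (\<forall>v\<in>A u. R v = 0))"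
    by auto
  define s where "s = (\<Sum>v\<in>A u. R v)"
  define th where "th = (if s \<le> D u then 1 else D u / s)"
  have Du: "D u \<ge> 0" using insert by auto
  have fin: "finite (A u)" using insert by auto
  have s0: "s \<ge> 0" unfolding s_def using R1 by (simp add: sum_nonneg)
  have th0: "0 \<le> th" "th \<le> 1" unfolding th_def using Du s0 by auto
  have ths: "th * s \<le> D u" "th * s = D u \<or> th = 1" unfolding th_def using Du s0 by auto
  define E' where "E' = E(u := (\<lambda>v. if v \<in> A u then th * R v else 0))"
  define R' where "R' = (\<lambda>v. if v \<in> A u then (1 - th) * R v else R v)"
  have sumE': "(\<Sum>w\<in>U. E' w v) = (\<Sum>w\<in>U. E w v)" for v
    using insert(2) unfolding E'_def by (intro sum.cong) auto
  have sumAu: "(\<Sum>v\<in>A u. E' u v) = th * s"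
    unfolding E'_def s_def by (simp add: sum_distrib_left)
  have c1: "\<forall>v. R' v \<ge> 0" unfolding R'_def using R1 th0 by auto
  have c2: "\<forall>v. R' v + (\<Sum>w\<in>insert u U. E' w v) = R0 v"
  proof
    fix v
    have "(\<Sum>w\<in>insert u U. E' w v) = E' u v + (\<Sum>w\<in>U. E w v)"
      using insert(1,2) sumE'[of v] by simp
    then show "R' v + (\<Sum>w\<in>insert u U. E' w v) = R0 v" using R2[rule_format, of v]
      by (cases "v \<in> A u") (simp_all add: R'_def E'_def algebra_simps)
  qed
  have c3: "\<forall>w\<in>insert u U. \<forall>v. E' w v \<ge> 0 \<and> (v \<notin> A w \<longrightarrow> E' w v = 0)"
  proof (intro ballI allI)
    fix w v assume "w \<in> insert u U"
    then show "E' w v \<ge> 0 \<and> (v \<notin> A w \<longrightarrow> E' w v = 0)"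
      using R3 R1 th0 unfolding E'_def by (cases "w = u") auto
  qed
  have c4: "\<forall>w\<in>insert u U. (\<Sum>v\<in>A w. E' w v) \<le> D w \<and> ((\<Sum>v\<in>A w. E' w v) = D w \<or> (\<forall>v\<in>A w. R' v = 0))"
  proof
    fix w assume w: "w \<in> insert u U"
    show "(\<Sum>v\<in>A w. E' w v) \<le> D w \<and> ((\<Sum>v\<in>A w. E' w v) = D w \<or> (\<forall>v\<in>A w. R' v = 0))"
    proof (cases "w = u")
      case True
      then show ?thesis using sumAu ths by (auto simp: R'_def)
    next
      case False
      then have wU: "w \<in> U" using w by auto
      have eq: "(\<Sum>v\<in>A w. E' w v) = (\<Sum>v\<in>A w. E w v)" using False unfolding E'_def by simp
      show ?thesis using R4[rule_format, OF wU] unfolding eq by (auto simp: R'_def)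
    qed
  qed
  show ?case using c1 c2 c3 c4 by blast
qed




lemma sep_finite:
  fixes A :: "'a::metric_space set"
  assumes "compact (UNIV :: 'a set)" "separated r A" "r > 0"
  shows "finite A"
proof (rule ccontr)
  assume inf: "infinite A"
  obtain x where "x islimpt A"
    using assms(1) inf unfolding compact_eq_Bolzano_Weierstrass by blast
  then have "infinite (A \<inter> ball x (r/2))" using assms(3) unfolding islimpt_eq_infinite_ball by auto
  then obtain y where y: "y \<in> A \<inter> ball x (r/2)" using infinite_imp_nonempty by blast
  have "infinite (A \<inter> ball x (r/2) - {y})" using \<open>infinite (A \<inter> ball x (r/2))\<close> by simp
  then obtain z where z: "z \<in> A \<inter> ball x (r/2) - {y}" using infinite_imp_nonempty by blast
  have yz: "y \<in> A \<inter> ball x (r/2)" "z \<in> A \<inter> ball x (r/2)" "y \<noteq> z" using y z by auto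
  then have "dist y z < r" using dist_triangle_half_r[of x y r z] by (auto simp: dist_commute)
  moreover have "dist y z \<ge> r" using assms(2) yz unfolding separated_def by auto
  ultimately show False by simp
qed




lemma coupling_measure:
  fixes T :: "'u \<Rightarrow> 'v \<Rightarrow> real" and fu :: "'u \<Rightarrow> 'a::topological_space" and fv :: "'v \<Rightarrow> 'b::topological_space"
  assumes "finite U" "finite V" "\<forall>u\<in>U. \<forall>v\<in>V. T u v \<ge> 0" "(\<Sum>u\<in>U. \<Sum>v\<in>V. T u v) = 1"
  shows "\<exists>M :: ('a \<times> 'b) measure. prob_space M \<and> sets M = sets borel \<and>
     (\<forall>B\<in>sets borel. measure M B = (\<Sum>u\<in>U. \<Sum>v\<in>V. T u v * indicator B (fu u, fv v)))"
proof -
  define W where "W = U \<times> V"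
  have finW: "finite W" using assms unfolding W_def by auto
  define N where "N = point_measure W (\<lambda>z. ennreal (T (fst z) (snd z)))"
  define g where "g = (\<lambda>z. (fu (fst z), fv (snd z)))"
  define M where "M = distr N borel g"
  have meas: "g \<in> measurable N borel" unfolding N_def using finW by simp
  have spN: "space N = W" unfolding N_def by (simp add: space_point_measure)
  have mM: "measure M B = (\<Sum>u\<in>U. \<Sum>v\<in>V. T u v * indicator B (fu u, fv v))" if B: "B \<in> sets borel" for B
  proof -
    have "measure M B = measure N (g -` B \<inter> W)"
      unfolding M_def using measure_distr[OF meas] B spN by simp
    also have "\<dots> = enn2real (\<Sum>z\<in>g -` B \<inter> W. ennreal (T (fst z) (snd z)))"
      unfolding N_def measure_def using finW by (subst emeasure_point_measure_finite) auto
    also have "\<dots> = (\<Sum>z\<in>g -` B \<inter> W. T (fst z) (snd z))"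
    proof -
      have nn: "\<forall>z\<in>g -` B \<inter> W. T (fst z) (snd z) \<ge> 0" using assms(3) by (auto simp: W_def)
      then have "(\<Sum>z\<in>g -` B \<inter> W. ennreal (T (fst z) (snd z))) = ennreal (\<Sum>z\<in>g -` B \<inter> W. T (fst z) (snd z))"
        by (subst sum_ennreal) auto
      moreover have "(\<Sum>z\<in>g -` B \<inter> W. T (fst z) (snd z)) \<ge> 0" using nn by (intro sum_nonneg) auto
      ultimately show ?thesis by simp
    qed
    also have "\<dots> = (\<Sum>z\<in>W. T (fst z) (snd z) * indicator B (g z))"
    proof -
      have "(\<Sum>z\<in>g -` B \<inter> W. T (fst z) (snd z)) = (\<Sum>z\<in>W \<inter> g -` B. T (fst z) (snd z))"
        by (simp add: Int_commute)
      also have "\<dots> = (\<Sum>z\<in>W. if z \<in> g -` B then T (fst z) (snd z) else 0)"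
        using finW by (rule sum.inter_restrict)
      also have "\<dots> = (\<Sum>z\<in>W. T (fst z) (snd z) * indicator B (g z))"
        by (intro sum.cong) (auto simp: indicator_def)
      finally show ?thesis .
    qed
    also have "\<dots> = (\<Sum>u\<in>U. \<Sum>v\<in>V. T u v * indicator B (fu u, fv v))"
      unfolding W_def g_def by (simp add: sum.cartesian_product case_prod_beta)
    finally show ?thesis .
  qed
  have setsM: "sets M = sets borel" unfolding M_def by simp
  have "emeasure M (space M) = 1"
  proof -
    have "emeasure M (space M) = emeasure N (g -` UNIV \<inter> W)"
      unfolding M_def using emeasure_distr[OF meas] spN by simp
    also have "\<dots> = (\<Sum>z\<in>W. ennreal (T (fst z) (snd z)))"
      unfolding N_def using finW by (subst emeasure_point_measure_finite) auto
    also have "\<dots> = ennreal (\<Sum>z\<in>W. T (fst z) (snd z))"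
      using assms(3) by (subst sum_ennreal) (auto simp: W_def intro!: sum_nonneg)
    also have "(\<Sum>z\<in>W. T (fst z) (snd z)) = 1"
      using assms(4) unfolding W_def by (simp add: sum.cartesian_product case_prod_beta)
    finally show ?thesis by simp
  qed
  then have "prob_space M" by (rule prob_spaceI)
  then show ?thesis using setsM mM by blast
qed




lemma anc_same: "anc par z n n = z"
  by (cases n) auto

theorem lemma3p11:
  fixes a lam p C eta_minus eta_plus :: real
    and Xs :: "nat \<Rightarrow> 'a::metric_space set" and x0 :: 'a
    and par :: "'a \<Rightarrow> nat \<Rightarrow> 'a"
    and rho :: "'a \<times> nat \<Rightarrow> real"
    and k :: nat and mu_k :: "'a \<times> nat \<Rightarrow> real"
  assumes compact_X: "compact (UNIV :: 'a set)"
    and doubling_X: "doubling TYPE('a)"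
    and diam_X: "diameter (UNIV :: 'a set) = 1/2"
    and params: "lam \<ge> 6" "a \<ge> lam"
    and filling: "hyp_filling a lam Xs x0 par"
    and p_pos: "p > 0"
    and H1: "0 < eta_minus" "eta_minus \<le> eta_plus" "eta_plus < 1"
            "\<forall>v\<in>Sall Xs. eta_minus \<le> rho v \<and> rho v \<le> eta_plus"
    and H4: "\<forall>m n v. v \<in> Sv Xs m \<longrightarrow> n > m \<longrightarrow>
               (\<Sum>w\<in>Desc Xs par n v. piv rho par w powr p) \<le> piv rho par v powr p"
    and C_ge: "C \<ge> eta_minus powr (- p)"
    and mu_pmf: "pmf_on mu_k (Sv Xs k)"
    and mu_bal: "balanced a lam Xs par rho p C k mu_k"
  shows "\<exists>mu_k1 :: 'a \<times> nat \<Rightarrow> real.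
           pmf_on mu_k1 (Sv Xs (Suc k)) \<and>
           compatible Xs par rho p C k mu_k mu_k1 \<and>
           balanced a lam Xs par rho p C (Suc k) mu_k1 \<and>
           (\<exists>M :: ('a \<times> 'a) measure.
              prob_space M \<and> sets M = sets borel \<and>
              (\<forall>A \<in> sets borel. measure M (fst -` A \<inter> space M)
                   = (\<Sum>u\<in>Sv Xs k. mu_k u * indicator A (fst u))) \<and>
              (\<forall>A \<in> sets borel. measure M (snd -` A \<inter> space M)
                   = (\<Sum>v\<in>Sv Xs (Suc k). mu_k1 v * indicator A (fst v))) \<and>
              measure M {z. dist (fst z) (snd z) \<ge> (1 + 2 * lam / a) * a powr (- real k)} = 0)"
proof -
  have a_pos: "a > 0" and lam_pos: "lam > 0" using params by linarith+
  have Xs_mono: "\<forall>n. Xs n \<subseteq> Xs (Suc n)" and msep: "\<forall>n. maximal_separated (a powr (- real n)) (Xs n)"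
    and parD: "\<forall>n x. n \<ge> 1 \<longrightarrow> x \<in> Xs n \<longrightarrow> par x n \<in> Xs (n - 1) \<and> (\<forall>z\<in>Xs (n - 1). dist x (par x n) \<le> dist x z)"
    using filling unfolding hyp_filling_def by auto
  have finX: "finite (Xs n)" for n
    using sep_finite[OF compact_X, of "a powr (- real n)" "Xs n"] msep a_pos
    unfolding maximal_separated_def by auto
  have Sv_iff: "v \<in> Sv Xs n \<longleftrightarrow> fst v \<in> Xs n \<and> snd v = n" for v n
    unfolding Sv_def by (cases v) auto
  have finSv: "finite (Sv Xs n)" for n unfolding Sv_def using finX by simp
  have Sall_iff: "v \<in> Sall Xs \<longleftrightarrow> fst v \<in> Xs (snd v)" for v
    unfolding Sall_def using Sv_iff by auto
  have rho_ge: "x \<in> Xs n \<Longrightarrow> rho (x, n) \<ge> eta_minus" for x n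
    using H1(4) Sall_iff[of "(x,n)"] by auto
  have pw_pos: "x \<in> Xs n \<Longrightarrow> pw rho par n x > 0" for n x
  proof (induction n arbitrary: x)
    case 0
    then show ?case using rho_ge[OF 0] H1(1) by simp
  next
    case (Suc n)
    have "par x (Suc n) \<in> Xs n" using parD Suc.prems by fastforce
    then show ?case using Suc.IH rho_ge[OF Suc.prems] H1(1) by simp
  qed
  define e where "e = a powr (- real k)"
  have e_pos: "e > 0" unfolding e_def using a_pos by simp
  have e1: "a powr (- real (Suc k)) = e / a"
  proof -
    have "a powr (- real (Suc k)) = a powr (- real k + - 1)" by (simp add: algebra_simps)
    also have "\<dots> = a powr (- real k) * a powr (- 1)" by (rule powr_add)
    also have "\<dots> = e / a" unfolding e_def using a_pos by (simp add: powr_neg_one)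
    finally show ?thesis .
  qed
  have lam_e: "lam * a powr (- real (Suc k)) \<le> e"
  proof -
    have "lam * (e / a) \<le> a * (e / a)" using params e_pos a_pos by (intro mult_right_mono) auto
    then show ?thesis unfolding e1 using a_pos by simp
  qed
  have parS: "par y (Suc k) \<in> Xs k \<and> dist y (par y (Suc k)) < e" if y: "y \<in> Xs (Suc k)" for y
  proof -
    have pk: "par y (Suc k) \<in> Xs k" and mn: "\<forall>z\<in>Xs k. dist y (par y (Suc k)) \<le> dist y z"
      using parD y by fastforce+
    have "dist y (par y (Suc k)) < e"
    proof (cases "y \<in> Xs k")
      case True
      then show ?thesis using mn e_pos by fastforce
    next
      case False
      have sepk: "separated e (Xs k)" and nsep: "\<not> separated e (insert y (Xs k))"
        using msep False unfolding maximal_separated_def e_def by auto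
      then obtain p q where pq: "p \<in> insert y (Xs k)" "q \<in> insert y (Xs k)" "p \<noteq> q" "dist p q < e"
        unfolding separated_def by force
      have "\<exists>z\<in>Xs k. dist y z < e"
      proof (cases "p = y")
        case True then show ?thesis using pq by auto
      next
        case False
        then have "p \<in> Xs k" using pq by auto
        moreover have "q = y"
        proof (rule ccontr)
          assume "q \<noteq> y"
          then have "q \<in> Xs k" using pq by auto
          then have "e \<le> dist p q" using sepk pq \<open>p \<in> Xs k\<close> unfolding separated_def by blast
          then show False using pq by simp
        qed
        ultimately show ?thesis using pq by (auto simp: dist_commute)
      qed
      then show ?thesis using mn by fastforce
    qed
    then show ?thesis using pk by simp
  qed
  have selfc: "x \<in> Xs (Suc k) \<and> par x (Suc k) = x" if x: "x \<in> Xs k" for x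
  proof -
    have xs: "x \<in> Xs (Suc k)" using Xs_mono x by auto
    have "dist x (par x (Suc k)) \<le> dist x x" using parD xs x by fastforce
    then show ?thesis using xs by simp
  qed
  have eta_le1: "eta_minus powr p \<le> 1" using H1 p_pos by (intro powr_le1) auto
  have Ceta: "C * eta_minus powr p \<ge> 1"
  proof -
    have "eta_minus powr (- p) = inverse (eta_minus powr p)" by (rule powr_minus)
    moreover have "eta_minus powr p > 0" using H1 by simp
    ultimately show ?thesis using C_ge by (simp add: field_simps)
  qed
  have ep: "eta_minus powr p > 0" using H1 by simp
  have "0 < C * eta_minus powr p" using Ceta by linarith
  then have Cpos: "0 < C" using ep by (simp add: zero_less_mult_iff)
  have "C * eta_minus powr p \<le> C" using eta_le1 Cpos by (simp add: mult_left_le)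
  then have C1: "C \<ge> 1" using Ceta by linarith
  define P where "P v = piv rho par v powr p" for v
  define F where "F u = mu_k u / P u" for u
  define pa where "pa v = (par (fst v) (Suc k), k)" for v :: "'a \<times> nat"
  define Ch where "Ch u = {v \<in> Sv Xs (Suc k). pa v = u}" for u
  define S where "S u = (\<Sum>v\<in>Ch u. P v)" for u
  have P_pos: "v \<in> Sv Xs n \<Longrightarrow> P v > 0" for v n
  proof -
    assume "v \<in> Sv Xs n"
    then have "pw rho par (snd v) (fst v) > 0" using pw_pos Sv_iff by auto
    then show ?thesis unfolding P_def piv_def by simp
  qed
  have mu_pos: "u \<in> Sv Xs k \<Longrightarrow> mu_k u > 0" for u using mu_bal unfolding balanced_def by auto
  have F_pos: "u \<in> Sv Xs k \<Longrightarrow> F u > 0" for u unfolding F_def using mu_pos P_pos by auto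
  have muF: "u \<in> Sv Xs k \<Longrightarrow> mu_k u = F u * P u" for u unfolding F_def using P_pos[of u k] by simp
  have pa_in: "v \<in> Sv Xs (Suc k) \<Longrightarrow> pa v \<in> Sv Xs k" for v
    unfolding pa_def using parS Sv_iff by auto
  have Ch_iff: "v \<in> Sv Xs (Suc k) \<Longrightarrow> v \<in> Ch u \<longleftrightarrow> pa v = u" for u v unfolding Ch_def by auto
  have P_child: "P v = rho v powr p * P (pa v)" if v: "v \<in> Sv Xs (Suc k)" for v
  proof -
    obtain y where vy: "v = (y, Suc k)" and y: "y \<in> Xs (Suc k)" using v Sv_iff by (cases v) auto
    have "piv rho par v = rho v * piv rho par (pa v)"
      unfolding piv_def pa_def vy by simp
    moreover have "rho v \<ge> 0" using rho_ge[OF y] H1(1) vy by simp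
    moreover have "piv rho par (pa v) \<ge> 0" using pw_pos pa_in[OF v] Sv_iff unfolding piv_def by (auto intro: less_imp_le)
    ultimately show ?thesis unfolding P_def by (simp add: powr_mult)
  qed
  have CP: "P (pa v) \<le> C * P v" if v: "v \<in> Sv Xs (Suc k)" for v
  proof -
    obtain y where vy: "v = (y, Suc k)" and y: "y \<in> Xs (Suc k)" using v Sv_iff by (cases v) auto
    have "rho v \<ge> eta_minus" using rho_ge[OF y] vy by simp
    then have "rho v powr p \<ge> eta_minus powr p" using H1 p_pos by (intro powr_mono2) auto
    moreover have "P (pa v) > 0" using P_pos pa_in[OF v] by auto
    ultimately have "C * P v \<ge> C * eta_minus powr p * P (pa v)"
      using P_child[OF v] C1 by (simp add: mult_left_mono mult_right_mono)
    moreover have "C * eta_minus powr p * P (pa v) \<ge> P (pa v)" using Ceta \<open>P (pa v) > 0\<close> by simp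
    ultimately show ?thesis by linarith
  qed
  have finCh: "finite (Ch u)" for u unfolding Ch_def using finSv by simp
  have selfCh: "(fst u, Suc k) \<in> Ch u" if u: "u \<in> Sv Xs k" for u
    using selfc[of "fst u"] u Sv_iff unfolding Ch_def pa_def by (cases u) auto
  have Desc_eq: "Desc Xs par (Suc k) u = Ch u" if u: "u \<in> Sv Xs k" for u
  proof -
    have "anc par y (Suc k) k = par y (Suc k)" for y by (simp add: anc_same)
    then show ?thesis using u Sv_iff unfolding Desc_def Ch_def pa_def by (cases u) auto
  qed
  have S_le: "S u \<le> P u" if u: "u \<in> Sv Xs k" for u
    using H4[rule_format, of u k "Suc k"] u Desc_eq[OF u] unfolding S_def P_def by simp
  have S_ge: "P u \<le> C * S u" and S_pos: "S u > 0" if u: "u \<in> Sv Xs k" for u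
  proof -
    have sv: "(fst u, Suc k) \<in> Sv Xs (Suc k)" using selfCh[OF u] unfolding Ch_def by auto
    have pa_s: "pa (fst u, Suc k) = u" using selfCh[OF u] unfolding Ch_def by auto
    have "P (fst u, Suc k) \<le> S u" unfolding S_def
    proof (rule member_le_sum)
      show "(fst u, Suc k) \<in> Ch u" by (rule selfCh[OF u])
      show "finite (Ch u)" by (rule finCh)
      show "\<And>x. x \<in> Ch u - {(fst u, Suc k)} \<Longrightarrow> 0 \<le> P x"
        using P_pos unfolding Ch_def by (auto intro: less_imp_le)
    qed
    moreover have "P u \<le> C * P (fst u, Suc k)" using CP[OF sv] pa_s by simp
    moreover have "P (fst u, Suc k) > 0" using P_pos[OF sv] .
    ultimately show "P u \<le> C * S u" "S u > 0" using C1 by (auto intro: order.trans mult_left_mono)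
  qed
  have adjz: "\<exists>z. dist (fst v) z < lam * a powr (- real (Suc k)) \<and> dist (fst v') z < lam * a powr (- real (Suc k))"
    if vv: "v \<in> Sv Xs (Suc k)" "v' \<in> Sv Xs (Suc k)" "D2_one a lam Xs par v v'" for v v'
  proof -
    have sv: "snd v = Suc k" "snd v' = Suc k" using vv Sv_iff by auto
    have "\<not> is_parent Xs par v v'" "\<not> is_parent Xs par v' v" unfolding is_parent_def using sv by auto
    then have "ball (fst v) (lam * a powr (- real (snd v))) \<inter> ball (fst v') (lam * a powr (- real (snd v'))) \<noteq> {}"
      using vv(3) unfolding D2_one_def fill_edge_def by auto
    then obtain z where "z \<in> ball (fst v) (lam * a powr (- real (snd v)))" "z \<in> ball (fst v') (lam * a powr (- real (snd v')))"
      by blast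
    then show ?thesis using sv by (auto simp: mem_ball)
  qed
  have child_dist: "dist (fst v) (fst (pa v)) < e" if v: "v \<in> Sv Xs (Suc k)" for v
    using parS[of "fst v"] v Sv_iff unfolding pa_def by auto
  have G1: "dist (fst (pa v)) (fst (pa v')) < lam * e"
    if vv: "v \<in> Sv Xs (Suc k)" "v' \<in> Sv Xs (Suc k)" "D2_one a lam Xs par v v'" for v v'
  proof -
    obtain z where z: "dist (fst v) z < lam * a powr (- real (Suc k))" "dist (fst v') z < lam * a powr (- real (Suc k))"
      using adjz[OF vv] by blast
    have t1: "dist (fst (pa v)) (fst (pa v')) \<le> dist (fst (pa v)) (fst v) + dist (fst v) (fst (pa v'))" by (rule dist_triangle)
    have t2: "dist (fst v) (fst (pa v')) \<le> dist (fst v) z + dist z (fst (pa v'))" by (rule dist_triangle)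
    have t3: "dist z (fst (pa v')) \<le> dist z (fst v') + dist (fst v') (fst (pa v'))" by (rule dist_triangle)
    have "dist (fst (pa v)) (fst (pa v')) \<le> dist (fst (pa v)) (fst v) + dist (fst v) z + dist z (fst v') + dist (fst v') (fst (pa v'))"
      using t1 t2 t3 by linarith
    also have "\<dots> < e + e + e + e"
      using z lam_e child_dist[OF vv(1)] child_dist[OF vv(2)] by (simp add: dist_commute)
    also have "\<dots> \<le> lam * e" using params e_pos by simp
    finally show ?thesis .
  qed
  have G2: "dist (fst (pa v)) (fst v') < (1 + 2 * lam / a) * e"
    if vv: "v \<in> Sv Xs (Suc k)" "v' \<in> Sv Xs (Suc k)" "D2_one a lam Xs par v v'" for v v'
  proof -
    obtain z where z: "dist (fst v) z < lam * a powr (- real (Suc k))" "dist (fst v') z < lam * a powr (- real (Suc k))"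
      using adjz[OF vv] by blast
    have t1: "dist (fst (pa v)) (fst v') \<le> dist (fst (pa v)) (fst v) + dist (fst v) (fst v')" by (rule dist_triangle)
    have t2: "dist (fst v) (fst v') \<le> dist (fst v) z + dist z (fst v')" by (rule dist_triangle)
    have "dist (fst (pa v)) (fst v') \<le> dist (fst (pa v)) (fst v) + dist (fst v) z + dist z (fst v')"
      using t1 t2 by linarith
    also have "\<dots> < e + lam * (e / a) + lam * (e / a)"
    proof -
      have h: "lam * a powr (- real (Suc k)) = lam * (e / a)" by (simp only: e1)
      have z1: "dist (fst v) z < lam * (e / a)" using z(1) h by simp
      have z2: "dist z (fst v') < lam * (e / a)" using z(2) h by (simp add: dist_commute)
      have c: "dist (fst (pa v)) (fst v) < e" using child_dist[OF vv(1)] by (simp add: dist_commute)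
      show ?thesis using z1 z2 c by linarith
    qed
    also have "\<dots> = (1 + 2 * lam / a) * e" by (simp add: field_simps)
    finally show ?thesis .
  qed
  have Adj: "F u \<le> C\<^sup>2 * F x"
    if ux: "u \<in> Sv Xs k" "x \<in> Sv Xs k" "dist (fst u) z < lam * e" "dist (fst x) z < lam * e" for u x z
  proof (cases "u = x")
    case True
    have c2: "1 \<le> C\<^sup>2" using C1 by (simp add: one_le_power)
    have "1 * F u \<le> C\<^sup>2 * F u" using c2 F_pos[OF ux(1)] by (intro mult_right_mono) auto
    then show ?thesis using True by simp
  next
    case False
    have sn: "snd u = k" "snd x = k" using ux Sv_iff by auto
    have "u \<in> Sall Xs" "x \<in> Sall Xs" using ux unfolding Sall_def by auto
    moreover have "z \<in> ball (fst u) (lam * a powr (- real (snd u)))" "z \<in> ball (fst x) (lam * a powr (- real (snd x)))"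
      using ux sn unfolding e_def by (auto simp: mem_ball)
    ultimately have "D2_one a lam Xs par u x" unfolding D2_one_def fill_edge_def using False sn
      by (metis disjoint_iff)
    then have "mu_k u / piv rho par u powr p \<le> C\<^sup>2 * mu_k x / piv rho par x powr p"
      using mu_bal ux unfolding balanced_def by blast
    then show ?thesis unfolding F_def P_def by simp
  qed
  have Fpa: "F (pa v) \<le> C\<^sup>2 * F (pa v')"
    if vv: "v \<in> Sv Xs (Suc k)" "v' \<in> Sv Xs (Suc k)" "D2_one a lam Xs par v v'" for v v'
    using Adj[OF pa_in[OF vv(1)] pa_in[OF vv(2)], of "fst (pa v')"] G1[OF vv] lam_pos e_pos by simp
  define A where "A u = {v' \<in> Sv Xs (Suc k). \<exists>v\<in>Ch u. D2_one a lam Xs par v v' \<and> F u > C * F (pa v')}" for u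
  define D where "D u = F u * (P u - S u)" for u
  define R0 where "R0 v = (if v \<in> Sv Xs (Suc k) \<and> A (pa v) = {} then F (pa v) * P v * (C - P (pa v) / S (pa v)) else 0)" for v
  have disj: "A u' = {}" if v': "v' \<in> A u" and u: "u \<in> Sv Xs k" and u': "u' = pa v'" for u u' v'
  proof (rule ccontr)
    assume "A u' \<noteq> {}"
    then obtain x' w where x': "x' \<in> Sv Xs (Suc k)" "w \<in> Ch u'" "D2_one a lam Xs par w x'" "F u' > C * F (pa x')"
      unfolding A_def by blast
    obtain v where v: "v' \<in> Sv Xs (Suc k)" "v \<in> Ch u" "D2_one a lam Xs par v v'" "F u > C * F (pa v')"
      using v' unfolding A_def by blast
    have vS: "v \<in> Sv Xs (Suc k)" "pa v = u" using v(2) unfolding Ch_def by auto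
    have wS: "w \<in> Sv Xs (Suc k)" "pa w = u'" using x'(2) unfolding Ch_def by auto
    have d1: "dist (fst u) (fst u') < lam * e" using G1[OF vS(1) v(1) v(3)] vS u' by simp
    have d2: "dist (fst (pa x')) (fst u') < lam * e" using G1[OF wS(1) x'(1) x'(3)] wS by (simp add: dist_commute)
    have "F u \<le> C\<^sup>2 * F (pa x')" using Adj[OF u pa_in[OF x'(1)] d1 d2] .
    moreover have "C * F u' > C * (C * F (pa x'))" using x'(4) C1 by simp
    ultimately show False using v(4) u' by (simp add: power2_eq_square)
  qed
  have finA: "finite (A u)" for u unfolding A_def using finSv by simp
  have A_sub: "A u \<subseteq> Sv Xs (Suc k)" for u unfolding A_def by auto
  have D_nn: "\<forall>u\<in>Sv Xs k. D u \<ge> 0"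
  proof
    fix u assume u: "u \<in> Sv Xs k"
    show "D u \<ge> 0" unfolding D_def using F_pos[OF u] S_le[OF u] by simp
  qed
  have PS_C: "P u / S u \<le> C" and PS_1: "P u / S u \<ge> 1" if u: "u \<in> Sv Xs k" for u
    using S_ge[OF u] S_pos[OF u] S_le[OF u] by (auto simp: field_simps)
  have R0_nn: "\<forall>v. R0 v \<ge> 0"
  proof
    fix v
    show "R0 v \<ge> 0"
    proof (cases "v \<in> Sv Xs (Suc k)")
      case True
      have "F (pa v) > 0" "P v > 0" "C - P (pa v) / S (pa v) \<ge> 0"
        using F_pos[OF pa_in[OF True]] P_pos[OF True] PS_C[OF pa_in[OF True]] by auto
      then show ?thesis unfolding R0_def by simp
    next
      case False
      then show ?thesis unfolding R0_def by simp
    qed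
  qed
  obtain E R where
    ER1: "\<forall>v. R v \<ge> 0" and ER2: "\<forall>v. R v + (\<Sum>u\<in>Sv Xs k. E u v) = R0 v" and
    ER3: "\<forall>u\<in>Sv Xs k. \<forall>v. E u v \<ge> 0 \<and> (v \<notin> A u \<longrightarrow> E u v = 0)" and
    ER4: "\<forall>u\<in>Sv Xs k. (\<Sum>v\<in>A u. E u v) \<le> D u \<and> ((\<Sum>v\<in>A u. E u v) = D u \<or> (\<forall>v\<in>A u. R v = 0))"
    using fill_lemma[of "Sv Xs k" A D R0] finSv finA D_nn R0_nn by blast
  define own where "own u v = (if v \<in> Ch u then P v / S u * (mu_k u - (\<Sum>w\<in>A u. E u w)) else 0)" for u v
  define T where "T u v = own u v + E u v" for u v
  define mu1 where "mu1 v = (\<Sum>u\<in>Sv Xs k. T u v)" for v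
  have q_lo: "F u * S u \<le> mu_k u - (\<Sum>w\<in>A u. E u w)" and q_hi: "mu_k u - (\<Sum>w\<in>A u. E u w) \<le> F u * P u"
    if u: "u \<in> Sv Xs k" for u
  proof -
    have "(\<Sum>w\<in>A u. E u w) \<le> D u" using ER4 u by blast
    moreover have "(\<Sum>w\<in>A u. E u w) \<ge> 0" using ER3 u by (intro sum_nonneg) blast
    ultimately show "F u * S u \<le> mu_k u - (\<Sum>w\<in>A u. E u w)" "mu_k u - (\<Sum>w\<in>A u. E u w) \<le> F u * P u"
      using muF[OF u] unfolding D_def by (auto simp: algebra_simps)
  qed
  have own_nn: "own u v \<ge> 0" if u: "u \<in> Sv Xs k" for u v
  proof -
    show ?thesis
    proof (cases "v \<in> Ch u")
      case True
      then have vS: "v \<in> Sv Xs (Suc k)" unfolding Ch_def by auto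
      have "F u * S u > 0" using F_pos[OF u] S_pos[OF u] by simp
      then have h1: "mu_k u - (\<Sum>w\<in>A u. E u w) \<ge> 0" using q_lo[OF u] by linarith
      have h2: "P v / S u \<ge> 0" using P_pos[OF vS] S_pos[OF u] by simp
      have "P v / S u * (mu_k u - (\<Sum>w\<in>A u. E u w)) \<ge> 0" using mult_nonneg_nonneg[OF h2 h1] .
      then show ?thesis unfolding own_def using True by argo
    next
      case False
      then show ?thesis unfolding own_def by simp
    qed
  qed
  have T_nn: "T u v \<ge> 0" if u: "u \<in> Sv Xs k" for u v
  proof -
    have "E u v \<ge> 0" using ER3 u by blast
    then show ?thesis unfolding T_def using own_nn[OF u, of v] by simp
  qed
  have rowsum: "(\<Sum>v\<in>Sv Xs (Suc k). T u v) = mu_k u" if u: "u \<in> Sv Xs k" for u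
  proof -
    have ChS: "Ch u \<subseteq> Sv Xs (Suc k)" unfolding Ch_def by auto
    have "(\<Sum>v\<in>Sv Xs (Suc k). own u v) = (\<Sum>v\<in>Ch u. own u v)"
      using ChS finSv by (intro sum.mono_neutral_right) (auto simp: own_def)
    also have "\<dots> = (\<Sum>v\<in>Ch u. P v) / S u * (mu_k u - (\<Sum>w\<in>A u. E u w))"
      unfolding own_def by (simp add: sum_distrib_right sum_divide_distrib)
    also have "\<dots> = mu_k u - (\<Sum>w\<in>A u. E u w)" using S_pos[OF u] unfolding S_def by simp
    finally have o: "(\<Sum>v\<in>Sv Xs (Suc k). own u v) = mu_k u - (\<Sum>w\<in>A u. E u w)" .
    have "(\<Sum>v\<in>Sv Xs (Suc k). E u v) = (\<Sum>v\<in>A u. E u v)"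
      using A_sub finSv ER3 u by (intro sum.mono_neutral_right) auto
    then show ?thesis using o unfolding T_def by (simp add: sum.distrib)
  qed
  have colsum: "mu1 v = own (pa v) v + (R0 v - R v)" if v: "v \<in> Sv Xs (Suc k)" for v
  proof -
    have "(\<Sum>u\<in>Sv Xs k. own u v) = (\<Sum>u\<in>Sv Xs k. if pa v = u then own (pa v) v else 0)"
      using Ch_iff[OF v] by (intro sum.cong) (auto simp: own_def)
    also have "\<dots> = own (pa v) v" using finSv pa_in[OF v] by simp
    finally have "(\<Sum>u\<in>Sv Xs k. own u v) = own (pa v) v" .
    moreover have "(\<Sum>u\<in>Sv Xs k. E u v) = R0 v - R v" using ER2[rule_format, of v] by linarith
    ultimately show ?thesis unfolding mu1_def T_def by (simp add: sum.distrib)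
  qed
  have sumE_nn: "(\<Sum>u\<in>Sv Xs k. E u v) \<ge> 0" for v using ER3 by (intro sum_nonneg) blast
  have bounds: "F (pa v) * P v \<le> mu1 v \<and> mu1 v \<le> C * F (pa v) * P v" if v: "v \<in> Sv Xs (Suc k)" for v
  proof -
    define u where "u = pa v"
    have u: "u \<in> Sv Xs k" unfolding u_def using pa_in[OF v] .
    have vC: "v \<in> Ch u" using v Ch_iff u_def by auto
    define q where "q = mu_k u - (\<Sum>w\<in>A u. E u w)"
    have ownv: "own u v = P v / S u * q" unfolding own_def q_def using vC by simp
    have Pv: "P v > 0" using P_pos[OF v] .
    have Su: "S u > 0" using S_pos[OF u] .
    have lo: "F u * P v \<le> own u v"
    proof -
      have "F u * P v = P v / S u * (F u * S u)" using Su by simp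
      also have "\<dots> \<le> P v / S u * q" unfolding q_def using q_lo[OF u] Pv Su by (intro mult_left_mono) auto
      finally show ?thesis using ownv by simp
    qed
    have hi: "own u v \<le> P v * F u * (P u / S u)"
    proof -
      have "P v / S u * q \<le> P v / S u * (F u * P u)" unfolding q_def using q_hi[OF u] Pv Su by (intro mult_left_mono) auto
      then show ?thesis using ownv by simp
    qed
    have RR: "R v \<le> R0 v" "R v \<ge> 0" using ER2[rule_format, of v] sumE_nn[of v] ER1[rule_format, of v] by linarith+
    show ?thesis
    proof (cases "A u = {}")
      case True
      have r0: "R0 v = F u * P v * (C - P u / S u)" unfolding R0_def using v True u_def by simp
      have own_eq: "own u v = P v * F u * (P u / S u)" using ownv True muF[OF u] unfolding q_def by simp
      have "F u * P v * 1 \<le> F u * P v * (P u / S u)" using PS_1[OF u] F_pos[OF u] Pv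
        by (intro mult_left_mono) auto
      then show ?thesis using colsum[OF v] own_eq r0 RR unfolding u_def[symmetric]
        by (auto simp: algebra_simps)
    next
      case False
      have r0: "R0 v = 0" unfolding R0_def using False u_def by simp
      have "R v = 0" using RR r0 by simp
      then have m: "mu1 v = own u v" using colsum[OF v] r0 u_def by simp
      have "P v * F u * (P u / S u) \<le> P v * F u * C" using PS_C[OF u] F_pos[OF u] Pv by (intro mult_left_mono) auto
      then show ?thesis using m lo hi unfolding u_def[symmetric] by (auto simp: algebra_simps)
    qed
  qed
  have gbounds: "F (pa v) \<le> mu1 v / P v \<and> mu1 v / P v \<le> C * F (pa v)" if v: "v \<in> Sv Xs (Suc k)" for v
    using bounds[OF v] P_pos[OF v] by (auto simp: field_simps)
  have Fv_le: "mu1 v / P v \<le> C * F (pa v)" and Fv_ge: "F (pa v) \<le> mu1 v / P v" if v: "v \<in> Sv Xs (Suc k)" for v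
    using gbounds[OF v] by auto
  have mu1_pos: "mu1 v > 0" if v: "v \<in> Sv Xs (Suc k)" for v
    using bounds[OF v] F_pos[OF pa_in[OF v]] P_pos[OF v] by (smt (verit) mult_pos_pos)
  have bal_pair: "mu1 v / P v \<le> C\<^sup>2 * (mu1 v' / P v')"
    if vv: "v \<in> Sv Xs (Suc k)" "v' \<in> Sv Xs (Suc k)" "D2_one a lam Xs par v v'" for v v'
  proof -
    define u where "u = pa v"
    define u' where "u' = pa v'"
    have u: "u \<in> Sv Xs k" and u': "u' \<in> Sv Xs k" using pa_in vv unfolding u_def u'_def by auto
    have Fuu: "F u \<le> C\<^sup>2 * F u'" using Fpa[OF vv] unfolding u_def u'_def .
    have gv: "mu1 v / P v \<le> C * F u" using Fv_le[OF vv(1)] unfolding u_def .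
    have gv': "F u' \<le> mu1 v' / P v'" using Fv_ge[OF vv(2)] unfolding u'_def .
    have C0: "C \<ge> 0" using C1 by simp
    have gvC: "C\<^sup>2 * F u' \<le> C\<^sup>2 * (mu1 v' / P v')" by (rule mult_left_mono[OF gv']) simp
    show ?thesis
    proof (cases "F u \<le> C * F u'")
      case True
      have "mu1 v / P v \<le> C * (C * F u')" using gv True C0 by (meson mult_left_mono order_trans)
      also have "\<dots> = C\<^sup>2 * F u'" by (simp add: power2_eq_square)
      also have "\<dots> \<le> C\<^sup>2 * (mu1 v' / P v')" by (rule gvC)
      finally show ?thesis .
    next
      case False
      have vCh: "v \<in> Ch u" using Ch_iff[OF vv(1)] u_def by simp
      have v'A: "v' \<in> A u" unfolding A_def using vv vCh False u'_def by auto
      have Au': "A u' = {}" using disj[OF v'A u u'_def] .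
      have Au: "A u \<noteq> {}" using v'A by auto
      have case4: "(\<Sum>w\<in>A u. E u w) = D u \<or> (\<forall>w\<in>A u. R w = 0)" using ER4 u by blast
      then show ?thesis
      proof
        assume SD: "(\<Sum>w\<in>A u. E u w) = D u"
        have r0: "R0 v = 0" unfolding R0_def using Au u_def by simp
        have "R v = 0" using ER2[rule_format, of v] sumE_nn[of v] ER1[rule_format, of v] r0 by linarith
        then have m: "mu1 v = own u v" using colsum[OF vv(1)] r0 u_def by simp
        have "mu_k u - (\<Sum>w\<in>A u. E u w) = F u * S u"
          using SD muF[OF u] unfolding D_def by (simp add: algebra_simps)
        then have "own u v = P v / S u * (F u * S u)"
          unfolding own_def using vCh by simp
        then have "mu1 v / P v = F u" using m S_pos[OF u] P_pos[OF vv(1)] by simp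
        also have "\<dots> \<le> C\<^sup>2 * F u'" by (rule Fuu)
        also have "\<dots> \<le> C\<^sup>2 * (mu1 v' / P v')" by (rule gvC)
        finally show ?thesis .
      next
        assume "\<forall>w\<in>A u. R w = 0"
        then have Rv': "R v' = 0" using v'A by blast
        have r0: "R0 v' = F u' * P v' * (C - P u' / S u')" unfolding R0_def using vv(2) Au' u'_def by simp
        have v'Ch: "v' \<in> Ch u'" using Ch_iff[OF vv(2)] u'_def by simp
        have ow: "own u' v' = P v' / S u' * (F u' * P u')" unfolding own_def using v'Ch Au' muF[OF u'] by simp
        have "mu1 v' = own u' v' + R0 v'" using colsum[OF vv(2)] Rv' u'_def by simp
        also have "\<dots> = C * F u' * P v'" unfolding ow r0 using S_pos[OF u'] by (simp add: field_simps)
        finally have "mu1 v' / P v' = C * F u'" using P_pos[OF vv(2)] by simp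
        moreover have "mu1 v / P v \<le> C * (C\<^sup>2 * F u')" using gv Fuu C0 by (meson mult_left_mono order_trans)
        ultimately show ?thesis by (simp add: algebra_simps)
      qed
    qed
  qed
  have reach: "T u v = 0" if u: "u \<in> Sv Xs k" and v: "v \<in> Sv Xs (Suc k)"
    and d: "dist (fst u) (fst v) \<ge> (1 + 2 * lam / a) * e" for u v
  proof (rule ccontr)
    assume "T u v \<noteq> 0"
    then have "own u v \<noteq> 0 \<or> E u v \<noteq> 0" unfolding T_def by auto
    then show False
    proof
      assume "own u v \<noteq> 0"
      then have "v \<in> Ch u" unfolding own_def by (auto split: if_splits)
      then have "pa v = u" using Ch_iff[OF v] by simp
      then have "dist (fst u) (fst v) < e" using child_dist[OF v] by (simp add: dist_commute)
      moreover have "e \<le> (1 + 2 * lam / a) * e" using e_pos lam_pos a_pos by simp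
      ultimately show False using d by simp
    next
      assume "E u v \<noteq> 0"
      then have "v \<in> A u" using ER3 u by blast
      then obtain w where w: "w \<in> Ch u" "D2_one a lam Xs par w v" unfolding A_def by blast
      have wS: "w \<in> Sv Xs (Suc k)" "pa w = u" using w(1) unfolding Ch_def by auto
      show False using G2[OF wS(1) v w(2)] wS(2) d by simp
    qed
  qed
  have total: "(\<Sum>u\<in>Sv Xs k. \<Sum>v\<in>Sv Xs (Suc k). T u v) = 1"
    using rowsum mu_pmf unfolding pmf_on_def by simp
  obtain M :: "('a \<times> 'a) measure" where M1: "prob_space M" and M2: "sets M = sets borel" and
    M3: "\<forall>B\<in>sets borel. measure M B = (\<Sum>u\<in>Sv Xs k. \<Sum>v\<in>Sv Xs (Suc k). T u v * indicator B (fst u, fst v))"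
    using coupling_measure[of "Sv Xs k" "Sv Xs (Suc k)" T fst fst] finSv T_nn total by blast
  have spM: "space M = UNIV" using sets_eq_imp_space_eq[OF M2] by simp
  have marg1: "\<forall>B \<in> sets borel. measure M (fst -` B \<inter> space M) = (\<Sum>u\<in>Sv Xs k. mu_k u * indicator B (fst u))"
  proof
    fix B :: "'a set" assume B: "B \<in> sets borel"
    have fm: "fst -` B \<in> sets (borel :: ('a \<times> 'a) measure)"
      by (rule measurable_sets_borel[OF borel_measurable_continuous_onI B]) (intro continuous_intros)
    have "measure M (fst -` B \<inter> space M) = (\<Sum>u\<in>Sv Xs k. \<Sum>v\<in>Sv Xs (Suc k). T u v * indicator (fst -` B) (fst u, fst v))"
      using M3 fm spM by simp
    also have "\<dots> = (\<Sum>u\<in>Sv Xs k. (\<Sum>v\<in>Sv Xs (Suc k). T u v) * indicator B (fst u))"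
      by (simp add: sum_distrib_right indicator_def)
    also have "\<dots> = (\<Sum>u\<in>Sv Xs k. mu_k u * indicator B (fst u))"
      using rowsum by simp
    finally show "measure M (fst -` B \<inter> space M) = (\<Sum>u\<in>Sv Xs k. mu_k u * indicator B (fst u))" .
  qed
  have marg2: "\<forall>B \<in> sets borel. measure M (snd -` B \<inter> space M) = (\<Sum>v\<in>Sv Xs (Suc k). mu1 v * indicator B (fst v))"
  proof
    fix B :: "'a set" assume B: "B \<in> sets borel"
    have fm: "snd -` B \<in> sets (borel :: ('a \<times> 'a) measure)"
      by (rule measurable_sets_borel[OF borel_measurable_continuous_onI B]) (intro continuous_intros)
    have "measure M (snd -` B \<inter> space M) = (\<Sum>u\<in>Sv Xs k. \<Sum>v\<in>Sv Xs (Suc k). T u v * indicator (snd -` B) (fst u, fst v))"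
      using M3 fm spM by simp
    also have "\<dots> = (\<Sum>v\<in>Sv Xs (Suc k). \<Sum>u\<in>Sv Xs k. T u v * indicator B (fst v))"
      by (subst sum.swap) (simp add: indicator_def)
    also have "\<dots> = (\<Sum>v\<in>Sv Xs (Suc k). mu1 v * indicator B (fst v))"
      unfolding mu1_def by (simp add: sum_distrib_right)
    finally show "measure M (snd -` B \<inter> space M) = (\<Sum>v\<in>Sv Xs (Suc k). mu1 v * indicator B (fst v))" .
  qed
  have far: "measure M {z. dist (fst z) (snd z) \<ge> (1 + 2 * lam / a) * a powr (- real k)} = 0"
  proof -
    define c where "c = (1 + 2 * lam / a) * e"
    have cl: "{z :: 'a \<times> 'a. c \<le> dist (fst z) (snd z)} \<in> sets borel"
      by (intro borel_closed closed_Collect_le continuous_intros)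
    have "measure M {z. c \<le> dist (fst z) (snd z)} =
        (\<Sum>u\<in>Sv Xs k. \<Sum>v\<in>Sv Xs (Suc k). T u v * indicator {z. c \<le> dist (fst z) (snd z)} (fst u, fst v))"
      using M3 cl by simp
    also have "\<dots> = 0"
      using reach unfolding c_def by (intro sum.neutral ballI) (auto simp: indicator_def)
    finally show ?thesis unfolding c_def e_def .
  qed
  have pmf1: "pmf_on mu1 (Sv Xs (Suc k))"
  proof -
    have "(\<Sum>v\<in>Sv Xs (Suc k). mu1 v) = (\<Sum>u\<in>Sv Xs k. \<Sum>v\<in>Sv Xs (Suc k). T u v)"
      unfolding mu1_def by (rule sum.swap)
    then show ?thesis unfolding pmf_on_def using finSv total mu1_pos by (auto intro: less_imp_le)
  qed
  have compat: "compatible Xs par rho p C k mu_k mu1"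
    unfolding compatible_def
  proof (intro ballI impI)
    fix u v assume u: "u \<in> Sv Xs k" and v: "v \<in> Sv Xs (Suc k)" and par: "is_parent Xs par u v"
    have "u = pa v" using par v Sv_iff unfolding is_parent_def pa_def by auto
    then show "mu_k u / piv rho par u powr p \<le> mu1 v / piv rho par v powr p \<and>
        mu1 v / piv rho par v powr p \<le> C * mu_k u / piv rho par u powr p"
      using gbounds[OF v] unfolding F_def P_def by simp
  qed
  have bal1: "balanced a lam Xs par rho p C (Suc k) mu1"
    unfolding balanced_def
  proof (intro conjI ballI impI)
    fix v assume "v \<in> Sv Xs (Suc k)" then show "mu1 v > 0" by (rule mu1_pos)
  next
    fix v v' assume "v \<in> Sv Xs (Suc k)" "v' \<in> Sv Xs (Suc k)" "D2_one a lam Xs par v v'"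
    then show "mu1 v / piv rho par v powr p \<le> C\<^sup>2 * mu1 v' / piv rho par v' powr p"
      using bal_pair unfolding P_def by simp
  qed
  show ?thesis
    using pmf1 compat bal1 M1 M2 marg1 marg2 far by blast
qed


end
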